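(* Let $m\ge1$ be an integer, $0<h\le1$, and $E=(\alpha+i\mu)h^{2m/(m+1)}$ with $\alpha,\mu>0$ independent of $h$. Let \[ \varphi(x)=\int_0^x(E+m^{-1}y^{2m})^{1/2}\,dy, \] where the branch of the square root is chosen to have positive imaginary part, and let \[ f=-h^2\Big(\tfrac34(\varphi')^{-2}(\varphi'')^2-\tfrac12(\varphi')^{-1}\varphi'''\Big). \] Then: (i) There exists $C>0$ independent of $h$ such that \[ |\operatorname{Im}\varphi|\le C\begin{cases}h(1+\log(x/h^{1/2})),& m=1,\\ h,& m\ge2.\end{cases} \] In particular, if $|x|\le Ch^{1/(m+1)}$, then $|\operatorname{Im}\varphi|\le C'$ for some $C'>0$ independent of $h$. (ii) There exists $C>0$ independent of $h$ such that \[ C^{-1}\sqrt{h^{2m/(m+1)}+x^{2m}}\le|\varphi'(x)|\le C\sqrt{h^{2m/(m+1)}+x^{2m}}. \] (iii) $\varphi'=(E+m^{-1}x^{2m})^{1/2}$, $\varphi''=x^{2m-1}(\varphi')^{-1}$, $\varphi'''=\big((1-m^{-1})x^{4m-2}+E(2m-1)x^{2m-2}\big)(\varphi')^{-3}$, and in particular \[ f=-h^2x^{2m-2}\Big(\big(\tfrac14+\tfrac1{2m}\big)x^{2m}-\big(m-\tfrac12\big)E\Big)(\varphi')^{-4}. \] *)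

theory Defs
  imports "HOL-Analysis.Analysis"
begin

definition sqrt_pos_im :: "complex \<Rightarrow> complex" where
  "sqrt_pos_im z = (THE w. w ^ 2 = z \<and> Im w > 0)"

definition E_par :: "nat \<Rightarrow> real \<Rightarrow> real \<Rightarrow> real \<Rightarrow> complex" where
  "E_par m \<alpha> \<mu> h = Complex \<alpha> \<mu> * complex_of_real (h powr (2 * real m / (real m + 1)))"

definition phi_integrand :: "nat \<Rightarrow> real \<Rightarrow> real \<Rightarrow> real \<Rightarrow> real \<Rightarrow> complex" where
  "phi_integrand m \<alpha> \<mu> h y =
     sqrt_pos_im (E_par m \<alpha> \<mu> h + complex_of_real (y ^ (2 * m) / real m))"

definition phi :: "nat \<Rightarrow> real \<Rightarrow> real \<Rightarrow> real \<Rightarrow> real \<Rightarrow> complex" where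
  "phi m \<alpha> \<mu> h x =
     (if 0 \<le> x then integral {0..x} (phi_integrand m \<alpha> \<mu> h)
      else - integral {x..0} (phi_integrand m \<alpha> \<mu> h))"

definition phi1 :: "nat \<Rightarrow> real \<Rightarrow> real \<Rightarrow> real \<Rightarrow> real \<Rightarrow> complex" where
  "phi1 m \<alpha> \<mu> h x = vector_derivative (phi m \<alpha> \<mu> h) (at x)"

definition phi2 :: "nat \<Rightarrow> real \<Rightarrow> real \<Rightarrow> real \<Rightarrow> real \<Rightarrow> complex" where
  "phi2 m \<alpha> \<mu> h x = vector_derivative (phi1 m \<alpha> \<mu> h) (at x)"

definition phi3 :: "nat \<Rightarrow> real \<Rightarrow> real \<Rightarrow> real \<Rightarrow> real \<Rightarrow> complex" where
  "phi3 m \<alpha> \<mu> h x = vector_derivative (phi2 m \<alpha> \<mu> h) (at x)"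

definition f_pot :: "nat \<Rightarrow> real \<Rightarrow> real \<Rightarrow> real \<Rightarrow> real \<Rightarrow> complex" where
  "f_pot m \<alpha> \<mu> h x =
     - complex_of_real (h ^ 2) *
       (3/4 * inverse (phi1 m \<alpha> \<mu> h x ^ 2) * (phi2 m \<alpha> \<mu> h x) ^ 2
        - 1/2 * inverse (phi1 m \<alpha> \<mu> h x) * phi3 m \<alpha> \<mu> h x)"

end

theory Submission
  imports Defs
begin

lemma sqrt_pos_im_eq:
  assumes "Im z > 0"
  shows "sqrt_pos_im z = csqrt z" "Im (csqrt z) > 0"
proof -
  have im: "Im (csqrt z) > 0"
  proof -
    have "Im z = 2 * Re (csqrt z) * Im (csqrt z)"
      by (metis Im_power2 power2_csqrt)
    from csqrt_principal[of z] show ?thesis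
    proof
      assume "0 < Re (csqrt z)" with \<open>Im z = _\<close> assms show ?thesis
        by (simp add: zero_less_mult_iff)
    next
      assume "Re (csqrt z) = 0 \<and> 0 \<le> Im (csqrt z)"
      with \<open>Im z = _\<close> assms show ?thesis by simp
    qed
  qed
  show "Im (csqrt z) > 0" by fact
  have uniq: "\<And>w. w ^ 2 = z \<and> Im w > 0 \<Longrightarrow> w = csqrt z"
  proof -
    fix w assume w: "w ^ 2 = z \<and> Im w > 0"
    then have "w * w = csqrt z * csqrt z" by (simp add: power2_eq_square[symmetric])
    then have "w = csqrt z \<or> w = - csqrt z" by (simp add: square_eq_iff)
    moreover have "w \<noteq> - csqrt z"
    proof
      assume "w = - csqrt z"
      then have "Im w = - Im (csqrt z)" by simp
      with w im show False by linarith
    qed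
    ultimately show "w = csqrt z" by blast
  qed
  show "sqrt_pos_im z = csqrt z"
    unfolding sqrt_pos_im_def by (rule the_equality) (use im uniq in auto)
qed

lemma Im_sqrt_bound:
  assumes "s ^ 2 = w" "Im s > 0" "Re w > 0" "Im w > 0"
  shows "Im s \<le> Im w / (2 * sqrt (Re w))" "Re s \<ge> sqrt (Re w)"
proof -
  have r: "Re w = Re s ^ 2 - Im s ^ 2" "Im w = 2 * Re s * Im s"
    using assms(1) by (auto simp: power2_eq_square)
  have "Re s ^ 2 \<ge> Re w" using r by simp
  then have "sqrt (Re w) \<le> \<bar>Re s\<bar>" by (metis real_sqrt_abs real_sqrt_le_mono)
  moreover have "Re s > 0"
    using r assms by (simp add: zero_less_mult_iff)
  ultimately show rs: "Re s \<ge> sqrt (Re w)" by simp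
  have "Im s = Im w / (2 * Re s)" using r \<open>Re s > 0\<close> by simp
  also have "\<dots> \<le> Im w / (2 * sqrt (Re w))"
    using assms rs r \<open>Re s > 0\<close>
    by (intro divide_left_mono) (auto intro: mult_pos_pos)
  finally show "Im s \<le> Im w / (2 * sqrt (Re w))" .
qed

lemma E_par_Re_Im:
  "Re (E_par m \<alpha> \<mu> h) = \<alpha> * h powr (2 * real m / (real m + 1))"
  "Im (E_par m \<alpha> \<mu> h) = \<mu> * h powr (2 * real m / (real m + 1))"
  by (simp_all add: E_par_def)

lemma w_props:
  fixes m :: nat and \<alpha> \<mu> h y :: real
  assumes "\<mu> > 0" "h > 0"
  defines "w \<equiv> E_par m \<alpha> \<mu> h + complex_of_real (y ^ (2 * m) / real m)"
  shows "Im w > 0" "phi_integrand m \<alpha> \<mu> h y = csqrt w"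
    "Im (phi_integrand m \<alpha> \<mu> h y) > 0" "phi_integrand m \<alpha> \<mu> h y ^ 2 = w"
    "phi_integrand m \<alpha> \<mu> h y \<noteq> 0" "w \<notin> \<real>\<^sub>\<le>\<^sub>0"
proof -
  show im: "Im w > 0" using assms by (simp add: w_def E_par_Re_Im)
  show eq: "phi_integrand m \<alpha> \<mu> h y = csqrt w"
    using sqrt_pos_im_eq[OF im] by (simp add: phi_integrand_def w_def)
  show "Im (phi_integrand m \<alpha> \<mu> h y) > 0" using sqrt_pos_im_eq[OF im] eq by simp
  then show "phi_integrand m \<alpha> \<mu> h y \<noteq> 0" by auto
  show "phi_integrand m \<alpha> \<mu> h y ^ 2 = w" using eq by simp
  show "w \<notin> \<real>\<^sub>\<le>\<^sub>0" using im complex_nonpos_Reals_iff by auto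
qed

lemma g_deriv:
  fixes x :: real
  assumes "m \<ge> 1" "\<mu> > 0" "h > 0"
  shows "(phi_integrand m \<alpha> \<mu> h has_vector_derivative
           complex_of_real (x ^ (2 * m - 1)) * inverse (phi_integrand m \<alpha> \<mu> h x)) (at x)"
proof -
  let ?E = "E_par m \<alpha> \<mu> h"
  let ?w = "\<lambda>y::real. ?E + complex_of_real (y ^ (2 * m) / real m)"
  have dw: "(?w has_vector_derivative complex_of_real (real (2*m) * x ^ (2 * m - 1) / real m)) (at x)"
  proof -
    have "((\<lambda>y::real. y ^ (2 * m) / real m) has_real_derivative (real (2*m) * x ^ (2 * m - 1) / real m)) (at x)"
      by (auto intro!: derivative_eq_intros)
    then have "((\<lambda>y. complex_of_real (y ^ (2 * m) / real m)) has_vector_derivative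
        complex_of_real (real (2*m) * x ^ (2 * m - 1) / real m)) (at x)"
      by (rule has_vector_derivative_of_real)
    then show ?thesis using has_vector_derivative_add[OF has_vector_derivative_const] by fastforce
  qed
  have dc: "(csqrt has_field_derivative inverse (2 * csqrt (?w x))) (at (?w x))"
    using w_props(6)[OF assms(2,3)] by (intro has_field_derivative_csqrt) auto
  have "((csqrt \<circ> ?w) has_vector_derivative
          complex_of_real (real (2*m) * x ^ (2 * m - 1) / real m) * inverse (2 * csqrt (?w x))) (at x)"
    by (rule field_vector_diff_chain_at[OF dw dc])
  moreover have "csqrt \<circ> ?w = phi_integrand m \<alpha> \<mu> h"
    using w_props(2)[OF assms(2,3)] by (auto simp: fun_eq_iff)
  moreover have "complex_of_real (real (2*m) * x ^ (2 * m - 1) / real m) * inverse (2 * csqrt (?w x))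
      = complex_of_real (x ^ (2 * m - 1)) * inverse (phi_integrand m \<alpha> \<mu> h x)"
    using assms(1) w_props(2)[OF assms(2,3), where y = x] by (simp add: field_simps)
  ultimately show ?thesis by simp
qed

lemma g_cont:
  assumes "m \<ge> 1" "\<mu> > 0" "h > 0"
  shows "continuous_on S (phi_integrand m \<alpha> \<mu> h)"
  by (rule continuous_on_vector_derivative, rule has_vector_derivative_at_within, rule g_deriv[OF assms])

lemma phi_deriv:
  assumes "m \<ge> 1" "\<mu> > 0" "h > 0"
  shows "(phi m \<alpha> \<mu> h has_vector_derivative phi_integrand m \<alpha> \<mu> h x0) (at x0)"
proof -
  let ?g = "phi_integrand m \<alpha> \<mu> h"
  define a where "a = min x0 0 - 1"
  define b where "b = max x0 0 + 1"
  let ?G = "\<lambda>u. integral {a..u} ?g"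
  have int: "?g integrable_on {c..d}" for c d
    by (rule integrable_continuous_real, rule g_cont[OF assms])
  have "(?G has_vector_derivative ?g x0) (at x0 within {a..b})"
    by (rule integral_has_vector_derivative, rule g_cont[OF assms]) (auto simp: a_def b_def)
  moreover have "x0 \<in> interior {a..b}" by (auto simp: a_def b_def)
  ultimately have d: "(?G has_vector_derivative ?g x0) (at x0)"
    using at_within_interior by metis
  have "((\<lambda>u. ?G u - ?G 0) has_vector_derivative ?g x0) (at x0)"
    using d by (auto intro!: derivative_eq_intros)
  then show ?thesis
  proof (rule has_vector_derivative_transform_within_open)
    show "open {a<..}" by simp
    show "x0 \<in> {a<..}" by (auto simp: a_def)
    fix y assume y: "y \<in> {a<..}"
    have a0: "a \<le> 0" by (simp add: a_def)
    show "?G y - ?G 0 = phi m \<alpha> \<mu> h y"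
    proof (cases "0 \<le> y")
      case True
      have "integral {a..0} ?g + integral {0..y} ?g = integral {a..y} ?g"
        by (rule Henstock_Kurzweil_Integration.integral_combine[OF a0 True int])
      then show ?thesis using True by (simp add: phi_def algebra_simps)
    next
      case False
      have "integral {a..y} ?g + integral {y..0} ?g = integral {a..0} ?g"
        using y False by (intro Henstock_Kurzweil_Integration.integral_combine int) auto
      then show ?thesis using False by (simp add: phi_def algebra_simps)
    qed
  qed
qed

lemma phi1_eq:
  assumes "m \<ge> 1" "\<mu> > 0" "h > 0"
  shows "phi1 m \<alpha> \<mu> h = phi_integrand m \<alpha> \<mu> h"
  unfolding phi1_def fun_eq_iff using phi_deriv[OF assms] vector_derivative_at by blast

lemma alg1:
  fixes G E :: complex and x :: real and n :: nat
  assumes "G \<noteq> 0" "G ^ 2 = E + complex_of_real (x ^ (2 * Suc n) / real (Suc n))"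
  shows "complex_of_real (x ^ (2 * n + 1)) * (complex_of_real (x ^ (2 * n + 1)) * inverse G * - (inverse G ^ 2))
     + complex_of_real (real (2 * n + 1) * x ^ (2 * n)) * inverse G
   = (complex_of_real ((1 - 1 / real (Suc n)) * x ^ (4 * n + 2))
              + E * complex_of_real ((2 * real (Suc n) - 1) * x ^ (2 * n))) * inverse (G ^ 3)"
proof -
  let ?A = "- (complex_of_real (x ^ (2 * n + 1)) ^ 2) + complex_of_real (real (2 * n + 1) * x ^ (2 * n)) * G^2"
  have 1: "complex_of_real (x ^ (2 * n + 1)) * (complex_of_real (x ^ (2 * n + 1)) * inverse G * - (inverse G ^ 2))
     + complex_of_real (real (2 * n + 1) * x ^ (2 * n)) * inverse G = ?A * inverse (G ^ 3)"
    using assms(1) by (simp add: field_simps power2_eq_square power3_eq_cube)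
  have p: "x ^ (2 * Suc n) = x^(2*n) * x^2" "x ^ (4 * n + 2) = x ^ (2*n) * x^(2*n) * x^2"
    "x ^ (2*n+1) = x^(2*n) * x"
  proof -
    show "x ^ (2 * Suc n) = x^(2*n) * x^2" by (simp add: power_add[symmetric])
    have "4*n+2 = 2*n + 2*n + 2" by simp
    then show "x ^ (4 * n + 2) = x ^ (2*n) * x^(2*n) * x^2" by (simp only: power_add)
    show "x ^ (2*n+1) = x^(2*n) * x" by simp
  qed
  have r: "real (2 * n + 1) * x ^ (2*n) * (x ^ (2*n) * x^2 / real (Suc n)) - (x^(2*n) * x)^2
      = (1 - 1 / real (Suc n)) * (x ^ (2*n) * x^(2*n) * x^2)"
    by (simp add: field_simps power2_eq_square)
  have "?A = (complex_of_real ((1 - 1 / real (Suc n)) * x ^ (4 * n + 2))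
              + E * complex_of_real ((2 * real (Suc n) - 1) * x ^ (2 * n)))"
    unfolding assms(2) 
  proof -
    have "complex_of_real ((1 - 1 / real (Suc n)) * x ^ (4 * n + 2)) =
          complex_of_real (real (2 * n + 1) * x ^ (2*n) * (x ^ (2*n) * x^2 / real (Suc n)) - (x^(2*n) * x)^2)"
      unfolding r p by simp
    then show "- (complex_of_real (x ^ (2 * n + 1)) ^ 2) + complex_of_real (real (2 * n + 1) * x ^ (2 * n)) *
      (E + complex_of_real (x ^ (2 * Suc n) / real (Suc n))) =
      complex_of_real ((1 - 1 / real (Suc n)) * x ^ (4 * n + 2)) +
      E * complex_of_real ((2 * real (Suc n) - 1) * x ^ (2 * n))"
      unfolding p(1,3) by (simp add: algebra_simps)
  qed
  with 1 show ?thesis by simp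
qed
lemma alg2:
  fixes G E :: complex and x h :: real and n m :: nat
  assumes "G \<noteq> 0" "m = Suc n"
  shows "- complex_of_real (h ^ 2) *
       (3/4 * inverse (G ^ 2) * (complex_of_real (x ^ (2 * m - 1)) * inverse G) ^ 2
        - 1/2 * inverse G * ((complex_of_real ((1 - 1 / real m) * x ^ (4 * m - 2))
              + E * complex_of_real ((2 * real m - 1) * x ^ (2 * m - 2)))
           * inverse (G ^ 3)))
   = - complex_of_real (h ^ 2 * x ^ (2 * m - 2)) *
             (complex_of_real ((1/4 + 1 / (2 * real m)) * x ^ (2 * m))
              - complex_of_real (real m - 1/2) * E)
             * inverse (G ^ 4)"
proof -
  have e: "2 * m - 1 = 2*n+1" "4 * m - 2 = 2*n + 2*n + 2" "2*m - 2 = 2*n" "2*m = 2*n+2" using assms(2) by simp_all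
  define X where "X = x^(2*n)"
  have p: "x ^ (2*n+1) = X * x" "x ^ (2*n + 2*n + 2) = X * X * x^2" "x^(2*n+2) = X * x^2"
    unfolding X_def by (simp only: power_add power_one_right)+
  have q: "x^(2*m-1) = X*x" "x^(4*m-2) = X*X*x^2" "x^(2*m-2) = X" "x^(2*m) = X*x^2"
    by (simp only: e(1) p(1), simp only: e(2) p(2), simp only: e(3) X_def, simp only: e(4) p(3))
  have mz: "real m \<noteq> 0" using assms(2) by simp
  have "- complex_of_real (h ^ 2) *
       (3/4 * inverse (G ^ 2) * (complex_of_real (X * x) * inverse G) ^ 2
        - 1/2 * inverse G * ((complex_of_real ((1 - 1 / real m) * (X * X * x^2))
              + E * complex_of_real ((2 * real m - 1) * X))
           * inverse (G ^ 3)))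
   = - complex_of_real (h ^ 2) * (3/4 * (complex_of_real (X * x))^2 - 1/2 * (complex_of_real ((1 - 1 / real m) * (X * X * x^2))
              + E * complex_of_real ((2 * real m - 1) * X))) * inverse (G ^ 4)"
    using assms(1) by (simp add: field_simps power2_eq_square power3_eq_cube power4_eq_xxxx)
  also have "\<dots> = - complex_of_real (h ^ 2 * X) *
             (complex_of_real ((1/4 + 1 / (2 * real m)) * (X * x^2))
              - complex_of_real (real m - 1/2) * E)
             * inverse (G ^ 4)"
    using mz assms(1) by (simp add: field_simps power2_eq_square)
  finally show ?thesis unfolding q .
qed

lemma alg1m:
  fixes G E :: complex and x :: real and m :: nat
  assumes "G \<noteq> 0" "G ^ 2 = E + complex_of_real (x ^ (2 * m) / real m)" "m \<ge> 1"
  shows "complex_of_real (x ^ (2 * m - 1)) * (complex_of_real (x ^ (2 * m - 1)) * inverse G * - (inverse G ^ 2))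
     + complex_of_real (real (2 * m - 1) * x ^ (2 * m - 2)) * inverse G
   = (complex_of_real ((1 - 1 / real m) * x ^ (4 * m - 2))
              + E * complex_of_real ((2 * real m - 1) * x ^ (2 * m - 2))) * inverse (G ^ 3)"
proof -
  obtain n where n: "m = Suc n" using assms(3) by (cases m) auto
  have e: "2 * m - 1 = 2*n+1" "4 * m - 2 = 4 * n + 2" "2*m - 2 = 2*n"
    using n by simp_all
  have "G ^ 2 = E + complex_of_real (x ^ (2 * Suc n) / real (Suc n))" using assms(2) n by simp
  from alg1[OF assms(1) this] show ?thesis unfolding e n[symmetric] .
qed

lemma phi2_eq:
  assumes "m \<ge> 1" "\<mu> > 0" "h > 0"
  shows "phi2 m \<alpha> \<mu> h = (\<lambda>x. complex_of_real (x ^ (2 * m - 1)) * inverse (phi_integrand m \<alpha> \<mu> h x))"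
  unfolding phi2_def fun_eq_iff phi1_eq[OF assms] using g_deriv[OF assms] vector_derivative_at by blast

lemma phi2_deriv:
  fixes x :: real
  assumes "m \<ge> 1" "\<mu> > 0" "h > 0"
  shows "(phi2 m \<alpha> \<mu> h has_vector_derivative
           (complex_of_real ((1 - 1 / real m) * x ^ (4 * m - 2))
              + E_par m \<alpha> \<mu> h * complex_of_real ((2 * real m - 1) * x ^ (2 * m - 2)))
           * inverse (phi_integrand m \<alpha> \<mu> h x ^ 3)) (at x)"
proof -
  let ?g = "phi_integrand m \<alpha> \<mu> h"
  let ?g' = "complex_of_real (x ^ (2 * m - 1)) * inverse (?g x)"
  have "((\<lambda>x::real. x^(2*m-1)) has_real_derivative real (2*m-1) * x^(2*m-1 - Suc 0)) (at x)"
    by (rule DERIV_pow)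
  moreover have "2*m-1 - Suc 0 = 2*m-2" by simp
  ultimately have "((\<lambda>x::real. x^(2*m-1)) has_real_derivative real (2*m-1) * x^(2*m-2)) (at x)"
    by simp
  then have d1: "((\<lambda>x. complex_of_real (x^(2*m-1))) has_vector_derivative
       complex_of_real (real (2*m-1) * x^(2*m-2))) (at x)"
    by (rule has_vector_derivative_of_real)
  have "((inverse \<circ> ?g) has_vector_derivative ?g' * - (inverse (?g x) ^ Suc (Suc 0))) (at x)"
    by (rule field_vector_diff_chain_at[OF g_deriv[OF assms] DERIV_inverse])
      (rule w_props(5)[OF assms(2,3)])
  then have d2: "((inverse \<circ> ?g) has_vector_derivative ?g' * - (inverse (?g x) ^ 2)) (at x)"
    by (simp only: numeral_2_eq_2)
  have "((\<lambda>x. complex_of_real (x^(2*m-1)) * inverse (?g x)) has_vector_derivative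
      complex_of_real (x^(2*m-1)) * (?g' * - (inverse (?g x) ^ 2))
      + complex_of_real (real (2*m-1) * x^(2*m-2)) * inverse (?g x)) (at x)"
    using has_vector_derivative_mult[OF d1 d2] by (simp only: o_def)
  note D = this
  have E: "complex_of_real (x^(2*m-1)) * (?g' * - (inverse (?g x) ^ 2))
      + complex_of_real (real (2*m-1) * x^(2*m-2)) * inverse (?g x)
      = (complex_of_real ((1 - 1 / real m) * x ^ (4 * m - 2))
              + E_par m \<alpha> \<mu> h * complex_of_real ((2 * real m - 1) * x ^ (2 * m - 2)))
           * inverse (?g x ^ 3)"
    by (rule alg1m[OF w_props(5,4)[OF assms(2,3), where m=m and \<alpha>=\<alpha> and y=x] assms(1)])
  show ?thesis unfolding phi2_eq[OF assms] using D unfolding E .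
qed


lemma even_pow_nonneg: "(x::real) ^ (2 * m) \<ge> 0"
proof -
  have "x ^ (2 * m) = (x ^ m) ^ 2" by (simp add: power_mult[symmetric] mult.commute)
  then show ?thesis by simp
qed

lemma phi1_norm:
  assumes "m \<ge> 1" "\<alpha> > 0" "\<mu> > 0" "h > 0"
  defines "c \<equiv> min \<alpha> (1 / real m)" and "D \<equiv> max (cmod (Complex \<alpha> \<mu>)) 1"
  shows "sqrt c * sqrt (h powr (2 * real m / (real m + 1)) + x ^ (2 * m)) \<le> cmod (phi1 m \<alpha> \<mu> h x)"
        "cmod (phi1 m \<alpha> \<mu> h x) \<le> sqrt D * sqrt (h powr (2 * real m / (real m + 1)) + x ^ (2 * m))"
proof -
  define e where "e = h powr (2 * real m / (real m + 1))"
  define X where "X = x ^ (2 * m)"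
  define w where "w = E_par m \<alpha> \<mu> h + complex_of_real (x ^ (2 * m) / real m)"
  have X0: "X \<ge> 0" unfolding X_def by (rule even_pow_nonneg)
  have e0: "e > 0" unfolding e_def using assms(4) by simp
  have nrm: "cmod (phi1 m \<alpha> \<mu> h x) = sqrt (cmod w)"
    using phi1_eq[OF assms(1,3,4)] w_props(2)[OF assms(3,4), where m=m and \<alpha>=\<alpha> and y=x]
    by (simp add: w_def)
  have Rew: "Re w = \<alpha> * e + X / real m" by (simp add: w_def E_par_Re_Im e_def X_def)
  have c: "c \<le> \<alpha>" "c \<le> 1 / real m" "c > 0" using assms(1,2) by (auto simp: c_def)
  have "c * (e + X) \<le> \<alpha> * e + X / real m"
  proof -
    have "c * e \<le> \<alpha> * e" using c e0 by (intro mult_right_mono) auto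
    moreover have "c * X \<le> X / real m" using c X0 mult_right_mono[OF c(2) X0] by simp
    ultimately show ?thesis by (simp add: distrib_left)
  qed
  also have "\<dots> \<le> cmod w" using Rew complex_Re_le_cmod by metis
  finally have lo: "c * (e + X) \<le> cmod w" .
  have "cmod w \<le> cmod (E_par m \<alpha> \<mu> h) + cmod (complex_of_real (X / real m))"
    unfolding w_def X_def by (rule norm_triangle_ineq)
  also have "\<dots> = cmod (Complex \<alpha> \<mu>) * e + X / real m"
  proof -
    have "cmod (complex_of_real (X / real m)) = X / real m" using X0 by (simp only: norm_of_real) simp
    moreover have "cmod (E_par m \<alpha> \<mu> h) = cmod (Complex \<alpha> \<mu>) * e"
      using e0 by (simp add: E_par_def e_def norm_mult)
    ultimately show ?thesis by simp
  qed
  also have "\<dots> \<le> D * e + D * X"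
  proof -
    have "cmod (Complex \<alpha> \<mu>) * e \<le> D * e" using e0 by (intro mult_right_mono) (auto simp: D_def)
    moreover have "X / real m \<le> X" using X0 assms(1) by (simp add: divide_le_eq mult_le_cancel_left1 mult_le_cancel_right1)
    moreover have "X \<le> D * X"
    proof -
      have "1 \<le> D" by (simp add: D_def)
      then show ?thesis using X0 mult_right_mono[of 1 D X] by simp
    qed
    ultimately show ?thesis by linarith
  qed
  finally have hi: "cmod w \<le> D * (e + X)" by (simp add: distrib_left)
  show "sqrt c * sqrt (h powr (2 * real m / (real m + 1)) + x ^ (2 * m)) \<le> cmod (phi1 m \<alpha> \<mu> h x)"
    unfolding nrm e_def[symmetric] X_def[symmetric] real_sqrt_mult[symmetric] using lo by simp
  show "cmod (phi1 m \<alpha> \<mu> h x) \<le> sqrt D * sqrt (h powr (2 * real m / (real m + 1)) + x ^ (2 * m))"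
    unfolding nrm e_def[symmetric] X_def[symmetric] real_sqrt_mult[symmetric] using hi by simp
qed

lemma Im_g_bound:
  assumes "m \<ge> 1" "\<alpha> > 0" "\<mu> > 0" "h > 0"
  defines "c \<equiv> min \<alpha> (1 / real m)" and "e \<equiv> h powr (2 * real m / (real m + 1))"
  shows "Im (phi_integrand m \<alpha> \<mu> h t) \<le> \<mu> * e / (2 * sqrt c * sqrt (e + t ^ (2 * m)))"
proof -
  define X where "X = t ^ (2 * m)"
  define w where "w = E_par m \<alpha> \<mu> h + complex_of_real (t ^ (2 * m) / real m)"
  have X0: "X \<ge> 0" unfolding X_def by (rule even_pow_nonneg)
  have e0: "e > 0" unfolding e_def using assms(4) by simp
  have Rew: "Re w = \<alpha> * e + X / real m" by (simp add: w_def E_par_Re_Im e_def X_def)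
  have Imw: "Im w = \<mu> * e" by (simp add: w_def E_par_Re_Im e_def)
  have c: "c \<le> \<alpha>" "c \<le> 1 / real m" "c > 0" using assms(1,2) by (auto simp: c_def)
  have "c * (e + X) \<le> \<alpha> * e + X / real m"
  proof -
    have "c * e \<le> \<alpha> * e" using c e0 by (intro mult_right_mono) auto
    moreover have "c * X \<le> X / real m" using c X0 mult_right_mono[OF c(2) X0] by simp
    ultimately show ?thesis by (simp add: distrib_left)
  qed
  then have sq: "sqrt c * sqrt (e + X) \<le> sqrt (Re w)" unfolding Rew real_sqrt_mult[symmetric] by simp
  have pos: "0 < sqrt c * sqrt (e + X)" using c e0 X0 by simp
  have "Im (phi_integrand m \<alpha> \<mu> h t) \<le> Im w / (2 * sqrt (Re w))"
  proof -
    have s2: "phi_integrand m \<alpha> \<mu> h t ^ 2 = w" unfolding w_def by (rule w_props(4)[OF assms(3,4)])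
    have ims: "Im (phi_integrand m \<alpha> \<mu> h t) > 0" by (rule w_props(3)[OF assms(3,4)])
    have imw: "Im w > 0" unfolding w_def by (rule w_props(1)[OF assms(3,4)])
    have Rw: "Re w > 0" unfolding Rew using e0 X0 assms(2) by (simp add: add_pos_nonneg)
    show ?thesis by (rule Im_sqrt_bound(1)[OF s2 ims Rw imw])
  qed
  also have "\<dots> \<le> \<mu> * e / (2 * (sqrt c * sqrt (e + X)))"
  proof -
    have "sqrt (Re w) > 0" using sq pos by linarith
    then show ?thesis
      unfolding Imw using sq pos assms(3) e0 by (intro divide_left_mono) (auto intro!: mult_pos_pos)
  qed
  finally show ?thesis by (simp only: X_def mult.assoc)
qed

lemma cmp:
  fixes P p F q :: "real \<Rightarrow> real"
  assumes "\<And>t. DERIV P t :> p t" "\<And>t. p t \<ge> 0" "\<And>t. p (-t) = p t" "P 0 = 0"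
    "\<And>t. t \<ge> 0 \<Longrightarrow> DERIV F t :> q t" "\<And>t. t \<ge> 0 \<Longrightarrow> p t \<le> q t" "F 0 = 0"
  shows "\<bar>P x\<bar> \<le> F \<bar>x\<bar>"
proof (cases "x \<ge> 0")
  case True
  have "(\<lambda>t. F t - P t) 0 \<le> (\<lambda>t. F t - P t) x"
    using True
  proof (rule DERIV_nonneg_imp_nondecreasing)
    fix t :: real assume t: "0 \<le> t" "t \<le> x"
    have "DERIV (\<lambda>t. F t - P t) t :> q t - p t"
      by (rule DERIV_diff[OF assms(5)[OF t(1)] assms(1)])
    then show "\<exists>y. DERIV (\<lambda>t. F t - P t) t :> y \<and> 0 \<le> y"
      using assms(6)[OF t(1)] by (intro exI[of _ "q t - p t"]) simp
  qed
  moreover have "P 0 \<le> P x"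
    by (rule DERIV_nonneg_imp_nondecreasing[where f=P]) (use True assms(1,2) in auto)
  ultimately show ?thesis using True assms(4,7) by simp
next
  case False
  have d: "DERIV (\<lambda>t. F (- t)) t :> - q (-t)" if "t \<le> 0" for t
    using DERIV_mirror[where f=F and x=t and y="q (-t)"] assms(5)[of "-t"] that by simp
  have "(\<lambda>t. - (F (-t) + P t)) x \<le> (\<lambda>t. - (F (-t) + P t)) 0"
  proof (rule DERIV_nonneg_imp_nondecreasing[where f="\<lambda>t. - (F (-t) + P t)"])
    show "x \<le> 0" using False by simp
  next
    fix t assume t: "x \<le> t" "t \<le> 0"
    have "DERIV (\<lambda>t. - (F (- t) + P t)) t :> - (- q (-t) + p t)"
      by (rule DERIV_minus, rule DERIV_add[OF d[OF t(2)] assms(1)])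
    then show "\<exists>y. DERIV (\<lambda>t. - (F (- t) + P t)) t :> y \<and> 0 \<le> y"
      using t assms(3) assms(6)[of "-t"] by (intro exI[of _ "- (- q (-t) + p t)"]) simp
  qed
  moreover have "P x \<le> P 0"
    by (rule DERIV_nonneg_imp_nondecreasing[where f=P]) (use False assms(1,2) in auto)
  ultimately show ?thesis using False assms(4,7) by simp
qed


lemma frac_le:
  fixes a c d s \<mu> H :: real
  assumes "c > 0" "s > 0" "d > 0" "a * d \<le> 2 * \<mu> * H * s"
  shows "a / (2 * sqrt c * s) \<le> (\<mu> / sqrt c) * H / d"
proof -
  have "a / (2 * sqrt c * s) = (a * d) / (2 * sqrt c * s * d)" using assms by simp
  also have "\<dots> \<le> (2 * \<mu> * H * s) / (2 * sqrt c * s * d)"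
    using assms by (intro divide_right_mono) auto
  also have "\<dots> = (\<mu> / sqrt c) * H / d" using assms by (simp add: field_simps)
  finally show ?thesis .
qed

lemma ln_bound: "(u::real) \<ge> 0 \<Longrightarrow> ln (1 + u) \<le> 1 + max 0 (ln u)"
proof (cases "u \<le> 1")
  case True
  assume "u \<ge> 0"
  then have "ln (1 + u) \<le> u" using ln_le_minus_one[of "1+u"] by simp
  then show ?thesis using True by simp
next
  case False
  then have "ln (1 + u) \<le> ln (2 * u)" by simp
  also have "\<dots> = ln 2 + ln u" using False by (simp add: ln_mult)
  also have "\<dots> \<le> 1 + ln u" using ln_2_less_1 by simp
  finally show ?thesis by simp
qed

lemma sqrt4: "sqrt (4::real) = 2" by (rule real_sqrt_unique) auto

lemma key_m1:
  fixes h t :: real assumes "h > 0" "t \<ge> 0"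
  shows "sqrt h + t \<le> 2 * sqrt (h + t ^ 2)"
proof -
  have "(sqrt h + t) ^ 2 \<le> 4 * (h + t ^ 2)"
  proof -
    have e1: "(sqrt h + t) ^ 2 = h + 2 * (sqrt h * t) + t^2" using assms by (simp add: power2_eq_square algebra_simps)
    have e2: "2 * (sqrt h * t) \<le> h + t^2"
      using sum_squares_bound[of "sqrt h" t] assms by simp
    show ?thesis unfolding e1 using e2 assms zero_le_power2[of t]
      by argo
  qed
  then have "sqrt h + t \<le> sqrt (4 * (h + t ^ 2))" by (rule real_le_rsqrt)
  also have "\<dots> = 2 * sqrt (h + t ^ 2)" by (simp only: real_sqrt_mult sqrt4)
  finally show ?thesis .
qed

lemma pw4: "(x::real) ^ (2 * (n + 2)) = x ^ (2 * n) * x ^ 4"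
proof -
  have "2 * (n + 2) = 2 * n + 4" by simp
  then show ?thesis by (simp only: power_add)
qed

lemma key_m2:
  fixes b t :: real assumes "b > 0" "t \<ge> 0"
  shows "b ^ n * (b^2 + t^2) \<le> 2 * sqrt (b ^ (2 * (n + 2)) + t ^ (2 * (n + 2)))"
proof -
  have A: "b ^ (2*n) * t ^ 4 \<le> b ^ (2 * (n + 2)) + t ^ (2 * (n + 2))"
  proof (cases "t \<le> b")
    case True
    then have "t ^ 4 \<le> b ^ 4" using assms by (intro power_mono) auto
    then have "b ^ (2*n) * t ^ 4 \<le> b ^ (2*n) * b ^ 4" using assms by (intro mult_left_mono) auto
    also have "\<dots> = b ^ (2 * (n + 2))" by (simp only: pw4)
    finally show ?thesis using assms by (simp add: add_increasing2)
  next
    case False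
    then have "b ^ (2*n) \<le> t ^ (2*n)" using assms by (intro power_mono) auto
    then have "b ^ (2*n) * t ^ 4 \<le> t ^ (2*n) * t ^ 4" using assms by (intro mult_right_mono) auto
    also have "\<dots> = t ^ (2 * (n + 2))" by (simp only: pw4)
    finally show ?thesis using assms by (simp add: add_increasing)
  qed
  have B: "(b^2 + t^2)^2 \<le> 2 * (b^4 + t^4)"
  proof -
    have "0 \<le> (b^2 - t^2)^2" by simp
    then show ?thesis by (simp add: power2_eq_square algebra_simps power4_eq_xxxx)
  qed
  have "(b ^ n * (b^2 + t^2)) ^ 2 = b ^ (2*n) * (b^2 + t^2)^2"
    by (simp add: power_mult_distrib power_mult[symmetric] mult.commute)
  also have "\<dots> \<le> b ^ (2*n) * (2 * (b^4 + t^4))" using B assms by (intro mult_left_mono) auto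
  also have "\<dots> = 2 * (b ^ (2*n) * b^4) + 2 * (b ^ (2*n) * t ^ 4)" by (simp add: algebra_simps)
  also have "b ^ (2*n) * b^4 = b ^ (2 * (n + 2))" by (simp only: pw4)
  also have "2 * b ^ (2 * (n + 2)) + 2 * (b ^ (2*n) * t ^ 4) \<le> 4 * (b ^ (2 * (n + 2)) + t ^ (2 * (n + 2)))"
  proof -
    have "0 \<le> t ^ (2 * (n + 2))" using assms by simp
    then show ?thesis using A by argo
  qed
  finally have "(b ^ n * (b^2 + t^2)) ^ 2 \<le> 4 * (b ^ (2 * (n + 2)) + t ^ (2 * (n + 2)))" .
  then have "b ^ n * (b^2 + t^2) \<le> sqrt (4 * (b ^ (2 * (n + 2)) + t ^ (2 * (n + 2))))" by (rule real_le_rsqrt)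
  also have "\<dots> = 2 * sqrt (b ^ (2 * (n + 2)) + t ^ (2 * (n + 2)))" by (simp only: real_sqrt_mult sqrt4)
  finally show ?thesis .
qed


lemma Im_phi_facts:
  assumes "m \<ge> 1" "\<mu> > 0" "h > 0"
  shows "\<And>t. DERIV (\<lambda>t. Im (phi m \<alpha> \<mu> h t)) t :> Im (phi_integrand m \<alpha> \<mu> h t)"
    "\<And>t. Im (phi_integrand m \<alpha> \<mu> h t) \<ge> 0"
    "\<And>t. Im (phi_integrand m \<alpha> \<mu> h (-t)) = Im (phi_integrand m \<alpha> \<mu> h t)"
    "Im (phi m \<alpha> \<mu> h 0) = 0"
proof -
  fix t
  show "DERIV (\<lambda>t. Im (phi m \<alpha> \<mu> h t)) t :> Im (phi_integrand m \<alpha> \<mu> h t)"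
    by (rule has_field_derivative_Im[OF phi_deriv[OF assms]])
  show "Im (phi_integrand m \<alpha> \<mu> h t) \<ge> 0"
    using w_props(3)[OF assms(2,3)] less_imp_le by blast
  have "(- t) ^ (2 * m) = t ^ (2 * m)" by (simp add: power_mult)
  then show "Im (phi_integrand m \<alpha> \<mu> h (-t)) = Im (phi_integrand m \<alpha> \<mu> h t)"
    by (simp add: phi_integrand_def)
next
  show "Im (phi m \<alpha> \<mu> h 0) = 0" by (simp add: phi_def)
qed

lemma part_i_m1:
  assumes "\<alpha> > 0" "\<mu> > 0" "h > 0"
  shows "\<bar>Im (phi 1 \<alpha> \<mu> h x)\<bar> \<le> (\<mu> / sqrt (min \<alpha> 1)) * (h * (1 + max 0 (ln (\<bar>x\<bar> / sqrt h))))"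
proof -
  define c where "c = min \<alpha> 1"
  define K where "K = \<mu> / sqrt c"
  have c0: "c > 0" using assms by (simp add: c_def)
  have K0: "K > 0" using assms c0 by (simp add: K_def)
  have sh: "sqrt h > 0" using assms by simp
  define F where "F t = K * h * ln (1 + t / sqrt h)" for t
  define q where "q t = K * h / (sqrt h + t)" for t
  have "\<bar>Im (phi 1 \<alpha> \<mu> h x)\<bar> \<le> F \<bar>x\<bar>"
  proof (rule cmp[where P="\<lambda>t. Im (phi 1 \<alpha> \<mu> h t)" and p="\<lambda>t. Im (phi_integrand 1 \<alpha> \<mu> h t)" and q=q])
    show "\<And>t. DERIV (\<lambda>t. Im (phi 1 \<alpha> \<mu> h t)) t :> Im (phi_integrand 1 \<alpha> \<mu> h t)"
      "\<And>t. Im (phi_integrand 1 \<alpha> \<mu> h t) \<ge> 0"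
      "\<And>t. Im (phi_integrand 1 \<alpha> \<mu> h (-t)) = Im (phi_integrand 1 \<alpha> \<mu> h t)"
      "Im (phi 1 \<alpha> \<mu> h 0) = 0"
      using Im_phi_facts[OF _ assms(2,3), of 1] by auto
    show "F 0 = 0" by (simp add: F_def)
  next
    fix t :: real assume t: "t \<ge> 0"
    have pos: "1 + t / sqrt h > 0" using t sh by (simp add: add_pos_nonneg)
    define b where "b = sqrt h"
    have b0: "b > 0" using sh by (simp add: b_def)
    have "DERIV (\<lambda>t. K * h * ln (1 + t / b)) t :> q t"
      unfolding q_def b_def[symmetric] using pos b0 t
      by (auto intro!: derivative_eq_intros simp: b_def[symmetric] field_simps)
    then show "DERIV F t :> q t" unfolding F_def b_def .
  next
    fix t :: real assume t: "t \<ge> 0"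
    have "Im (phi_integrand 1 \<alpha> \<mu> h t) \<le> \<mu> * h / (2 * sqrt c * sqrt (h + t ^ 2))"
      using Im_g_bound[OF _ assms, of 1 t] assms(3) by (simp add: c_def)
    also have "\<dots> \<le> (\<mu> / sqrt c) * h / (sqrt h + t)"
    proof (rule frac_le)
      show "0 < c" "0 < sqrt (h + t^2)" "0 < sqrt h + t" using c0 assms t by (auto simp: add_pos_nonneg)
      have "\<mu> * h * (sqrt h + t) \<le> \<mu> * h * (2 * sqrt (h + t ^ 2))"
        using key_m1[OF assms(3) t] assms by (intro mult_left_mono) auto
      then show "\<mu> * h * (sqrt h + t) \<le> 2 * \<mu> * h * sqrt (h + t^2)" by simp
    qed
    finally show "Im (phi_integrand 1 \<alpha> \<mu> h t) \<le> q t" by (simp add: q_def K_def)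
  qed
  also have "\<dots> \<le> K * (h * (1 + max 0 (ln (\<bar>x\<bar> / sqrt h))))"
    unfolding F_def using ln_bound[of "\<bar>x\<bar> / sqrt h"] K0 assms(3) sh
    by (simp add: mult_left_mono)
  finally show ?thesis by (simp add: K_def c_def)
qed


lemma part_i_m2:
  assumes "m \<ge> 2" "\<alpha> > 0" "\<mu> > 0" "h > 0"
  shows "\<bar>Im (phi m \<alpha> \<mu> h x)\<bar> \<le> (2 * (\<mu> / sqrt (min \<alpha> (1 / real m)))) * h"
proof -
  have m1: "m \<ge> 1" using assms by simp
  obtain n where n: "m = n + 2" using assms(1) by (metis add.commute le_Suc_ex)
  define c where "c = min \<alpha> (1 / real m)"
  define K where "K = \<mu> / sqrt c"
  have c0: "c > 0" using assms by (simp add: c_def)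
  have K0: "K > 0" using assms c0 by (simp add: K_def)
  define b where "b = h powr (1 / (real m + 1))"
  have b0: "b > 0" using assms by (simp add: b_def)
  have be: "b ^ (2 * m) = h powr (2 * real m / (real m + 1))"
  proof -
    have "b ^ (2 * m) = b powr real (2 * m)" by (rule powr_realpow[OF b0, symmetric])
    also have "\<dots> = h powr (1 / (real m + 1) * real (2 * m))" by (simp add: b_def powr_powr)
    finally show ?thesis by simp
  qed
  have bh: "b ^ (m + 1) = h"
  proof -
    have "b ^ (m + 1) = b powr real (m + 1)" by (rule powr_realpow[OF b0, symmetric])
    also have "\<dots> = h powr (1 / (real m + 1) * real (m + 1))" by (simp add: b_def powr_powr)
    also have "1 / (real m + 1) * real (m + 1) = 1" by simp
    finally show ?thesis using assms(4) by simp
  qed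
  define F where "F t = K * h * arctan (t / b)" for t
  define q where "q t = K * h * b / (b^2 + t^2)" for t
  have "\<bar>Im (phi m \<alpha> \<mu> h x)\<bar> \<le> F \<bar>x\<bar>"
  proof (rule cmp[where P="\<lambda>t. Im (phi m \<alpha> \<mu> h t)" and p="\<lambda>t. Im (phi_integrand m \<alpha> \<mu> h t)" and q=q])
    show "\<And>t. DERIV (\<lambda>t. Im (phi m \<alpha> \<mu> h t)) t :> Im (phi_integrand m \<alpha> \<mu> h t)"
      "\<And>t. Im (phi_integrand m \<alpha> \<mu> h t) \<ge> 0"
      "\<And>t. Im (phi_integrand m \<alpha> \<mu> h (-t)) = Im (phi_integrand m \<alpha> \<mu> h t)"
      "Im (phi m \<alpha> \<mu> h 0) = 0"
      using Im_phi_facts[OF m1 assms(3,4)] by auto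
    show "F 0 = 0" by (simp add: F_def)
  next
    fix t :: real assume t: "t \<ge> 0"
    show "DERIV F t :> q t"
      unfolding F_def q_def using b0
      by (auto intro!: derivative_eq_intros simp: field_simps power2_eq_square)
  next
    fix t :: real assume t: "t \<ge> 0"
    define S where "S = b ^ (2 * m) + t ^ (2 * m)"
    have S0: "S > 0" unfolding S_def using b0 even_pow_nonneg[of t m] by (simp add: add_pos_nonneg)
    have "Im (phi_integrand m \<alpha> \<mu> h t) \<le> \<mu> * b ^ (2 * m) / (2 * sqrt c * sqrt S)"
      using Im_g_bound[OF m1 assms(2,3,4), of t] by (simp add: c_def S_def be)
    also have "\<dots> \<le> (\<mu> / sqrt c) * (h * b) / (b^2 + t^2)"
    proof (rule frac_le)
      show "0 < c" "0 < sqrt S" "0 < b^2 + t^2" using c0 S0 b0 t by (auto simp: add_pos_nonneg)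
      have k: "b ^ n * (b^2 + t^2) \<le> 2 * sqrt S"
        using key_m2[OF b0 t, of n] unfolding S_def n .
      have e1: "b ^ (2 * m) = b ^ (m + 2) * b ^ n"
      proof -
        have "2 * m = (m + 2) + n" using n by simp
        then show ?thesis by (simp only: power_add)
      qed
      have e2: "h * b = b ^ (m + 2)" unfolding bh[symmetric] by simp
      have "\<mu> * b ^ (2 * m) * (b^2 + t^2) = \<mu> * b ^ (m + 2) * (b ^ n * (b^2 + t^2))"
        unfolding e1 by (simp add: algebra_simps)
      also have "\<dots> \<le> \<mu> * b ^ (m + 2) * (2 * sqrt S)"
        using k assms(3) b0 by (intro mult_left_mono) auto
      finally show "\<mu> * b ^ (2 * m) * (b^2 + t^2) \<le> 2 * \<mu> * (h * b) * sqrt S"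
        unfolding e2 by (simp add: algebra_simps)
    qed
    finally show "Im (phi_integrand m \<alpha> \<mu> h t) \<le> q t" by (simp add: q_def K_def mult.assoc)
  qed
  also have "\<dots> \<le> K * h * 2"
  proof -
    have "arctan (\<bar>x\<bar> / b) \<le> 2" using arctan_ubound[of "\<bar>x\<bar> / b"] pi_less_4 by linarith
    then show ?thesis unfolding F_def using K0 assms(4) by (intro mult_left_mono) auto
  qed
  also have "K * h * 2 = (2 * (\<mu> / sqrt (min \<alpha> (1 / real m)))) * h" by (simp add: K_def c_def)
  finally show ?thesis .
qed


theorem lemma5p1:
  fixes m :: nat and \<alpha> \<mu> :: real
  assumes "m \<ge> 1" and "\<alpha> > 0" and "\<mu> > 0"
  shows
    \<comment> \<open>(i)\<close>
    "(\<exists>C>0. \<forall>h x. 0 < h \<and> h \<le> 1 \<longrightarrow>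
        \<bar>Im (phi m \<alpha> \<mu> h x)\<bar> \<le> C *
          (if m = 1 then h * (1 + max 0 (ln (\<bar>x\<bar> / sqrt h))) else h))
     \<and> (\<forall>K>0. \<exists>C'>0. \<forall>h x. 0 < h \<and> h \<le> 1 \<and> \<bar>x\<bar> \<le> K * h powr (1 / (real m + 1)) \<longrightarrow>
        \<bar>Im (phi m \<alpha> \<mu> h x)\<bar> \<le> C')
     \<comment> \<open>(ii)\<close>
     \<and> (\<exists>C>0. \<forall>h x. 0 < h \<and> h \<le> 1 \<longrightarrow>
        inverse C * sqrt (h powr (2 * real m / (real m + 1)) + x ^ (2 * m)) \<le> cmod (phi1 m \<alpha> \<mu> h x)
        \<and> cmod (phi1 m \<alpha> \<mu> h x) \<le> C * sqrt (h powr (2 * real m / (real m + 1)) + x ^ (2 * m)))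
     \<comment> \<open>(iii)\<close>
     \<and> (\<forall>h x. 0 < h \<and> h \<le> 1 \<longrightarrow>
        (phi m \<alpha> \<mu> h has_vector_derivative
           sqrt_pos_im (E_par m \<alpha> \<mu> h + complex_of_real (x ^ (2 * m) / real m))) (at x)
        \<and> (phi1 m \<alpha> \<mu> h has_vector_derivative
           complex_of_real (x ^ (2 * m - 1)) * inverse (phi1 m \<alpha> \<mu> h x)) (at x)
        \<and> (phi2 m \<alpha> \<mu> h has_vector_derivative
           (complex_of_real ((1 - 1 / real m) * x ^ (4 * m - 2))
              + E_par m \<alpha> \<mu> h * complex_of_real ((2 * real m - 1) * x ^ (2 * m - 2)))
           * inverse (phi1 m \<alpha> \<mu> h x ^ 3)) (at x)
        \<and> f_pot m \<alpha> \<mu> h x =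
           - complex_of_real (h ^ 2 * x ^ (2 * m - 2)) *
             (complex_of_real ((1/4 + 1 / (2 * real m)) * x ^ (2 * m))
              - complex_of_real (real m - 1/2) * E_par m \<alpha> \<mu> h)
             * inverse (phi1 m \<alpha> \<mu> h x ^ 4))"
proof -
  have m1: "m \<ge> 1" by fact
  have mpos: "real m > 0" using assms(1) by simp
  have I1: "\<exists>C>0. \<forall>h x. 0 < h \<and> h \<le> 1 \<longrightarrow>
        \<bar>Im (phi m \<alpha> \<mu> h x)\<bar> \<le> C *
          (if m = 1 then h * (1 + max 0 (ln (\<bar>x\<bar> / sqrt h))) else h)"
  proof (cases "m = 1")
    case True
    have "\<mu> / sqrt (min \<alpha> 1) > 0" using assms by simp
    moreover have "\<forall>h x. 0 < h \<and> h \<le> 1 \<longrightarrow>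
        \<bar>Im (phi m \<alpha> \<mu> h x)\<bar> \<le> (\<mu> / sqrt (min \<alpha> 1)) *
          (if m = 1 then h * (1 + max 0 (ln (\<bar>x\<bar> / sqrt h))) else h)"
      using part_i_m1[OF assms(2,3)] True by simp
    ultimately show ?thesis by blast
  next
    case False
    then have m2: "m \<ge> 2" using assms(1) by simp
    have "2 * (\<mu> / sqrt (min \<alpha> (1 / real m))) > 0" using assms mpos by simp
    moreover have "\<forall>h x. 0 < h \<and> h \<le> 1 \<longrightarrow>
        \<bar>Im (phi m \<alpha> \<mu> h x)\<bar> \<le> (2 * (\<mu> / sqrt (min \<alpha> (1 / real m)))) *
          (if m = 1 then h * (1 + max 0 (ln (\<bar>x\<bar> / sqrt h))) else h)"
      using part_i_m2[OF m2 assms(2,3)] False by simp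
    ultimately show ?thesis by blast
  qed
  have I2: "\<forall>K>0. \<exists>C'>0. \<forall>h x. 0 < h \<and> h \<le> 1 \<and> \<bar>x\<bar> \<le> K * h powr (1 / (real m + 1)) \<longrightarrow>
        \<bar>Im (phi m \<alpha> \<mu> h x)\<bar> \<le> C'"
  proof (intro allI impI)
    fix K :: real assume K: "K > 0"
    from I1 obtain C where C: "C > 0" and HC: "\<And>h x. 0 < h \<and> h \<le> 1 \<Longrightarrow>
        \<bar>Im (phi m \<alpha> \<mu> h x)\<bar> \<le> C *
          (if m = 1 then h * (1 + max 0 (ln (\<bar>x\<bar> / sqrt h))) else h)" by blast
    have "\<forall>h x. 0 < h \<and> h \<le> 1 \<and> \<bar>x\<bar> \<le> K * h powr (1 / (real m + 1)) \<longrightarrow>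
        \<bar>Im (phi m \<alpha> \<mu> h x)\<bar> \<le> C * (1 + K)"
    proof (intro allI impI)
      fix h x :: real assume hx: "0 < h \<and> h \<le> 1 \<and> \<bar>x\<bar> \<le> K * h powr (1 / (real m + 1))"
      have B: "(if m = 1 then h * (1 + max 0 (ln (\<bar>x\<bar> / sqrt h))) else h) \<le> 1 + K"
      proof (cases "m = 1")
        case True
        have sh: "sqrt h > 0" using hx by simp
        have "h powr (1 / (real m + 1)) = sqrt h" using True hx by (simp add: powr_half_sqrt)
        then have u: "\<bar>x\<bar> / sqrt h \<le> K" using hx sh by (simp add: divide_le_eq mult.commute)
        have "max 0 (ln (\<bar>x\<bar> / sqrt h)) \<le> K"
        proof (cases "x = 0")
          case True then show ?thesis using K by simp
        next
          case False
          then have "\<bar>x\<bar> / sqrt h > 0" using sh by simp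
          then have "ln (\<bar>x\<bar> / sqrt h) \<le> \<bar>x\<bar> / sqrt h - 1" by (rule ln_le_minus_one)
          then show ?thesis using u K by simp
        qed
        moreover have "0 \<le> 1 + max 0 (ln (\<bar>x\<bar> / sqrt h))" by simp
        ultimately have "h * (1 + max 0 (ln (\<bar>x\<bar> / sqrt h))) \<le> 1 * (1 + K)"
          using hx by (intro mult_mono) auto
        then show ?thesis using True by simp
      next
        case False then show ?thesis using hx K by simp
      qed
      have "\<bar>Im (phi m \<alpha> \<mu> h x)\<bar> \<le> C *
          (if m = 1 then h * (1 + max 0 (ln (\<bar>x\<bar> / sqrt h))) else h)" using HC hx by blast
      also have "\<dots> \<le> C * (1 + K)" using B C by (intro mult_left_mono) auto
      finally show "\<bar>Im (phi m \<alpha> \<mu> h x)\<bar> \<le> C * (1 + K)" .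
    qed
    moreover have "C * (1 + K) > 0" using C K by simp
    ultimately show "\<exists>C'>0. \<forall>h x. 0 < h \<and> h \<le> 1 \<and> \<bar>x\<bar> \<le> K * h powr (1 / (real m + 1)) \<longrightarrow>
        \<bar>Im (phi m \<alpha> \<mu> h x)\<bar> \<le> C'" by blast
  qed
  have II: "\<exists>C>0. \<forall>h x. 0 < h \<and> h \<le> 1 \<longrightarrow>
        inverse C * sqrt (h powr (2 * real m / (real m + 1)) + x ^ (2 * m)) \<le> cmod (phi1 m \<alpha> \<mu> h x)
        \<and> cmod (phi1 m \<alpha> \<mu> h x) \<le> C * sqrt (h powr (2 * real m / (real m + 1)) + x ^ (2 * m))"
  proof -
    define c where "c = min \<alpha> (1 / real m)"
    define D where "D = max (cmod (Complex \<alpha> \<mu>)) 1"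
    define C where "C = max (sqrt D) (1 / sqrt c)"
    have c0: "c > 0" using assms mpos by (simp add: c_def)
    have C0: "C > 0" using c0 by (simp add: C_def less_max_iff_disj)
    have iC: "inverse C \<le> sqrt c"
    proof -
      have "1 / sqrt c \<le> C" by (simp add: C_def)
      then have "inverse C \<le> inverse (1 / sqrt c)" using c0 by (intro le_imp_inverse_le) auto
      then show ?thesis by simp
    qed
    have DC: "sqrt D \<le> C" by (simp add: C_def)
    have "\<forall>h x. 0 < h \<and> h \<le> 1 \<longrightarrow>
        inverse C * sqrt (h powr (2 * real m / (real m + 1)) + x ^ (2 * m)) \<le> cmod (phi1 m \<alpha> \<mu> h x)
        \<and> cmod (phi1 m \<alpha> \<mu> h x) \<le> C * sqrt (h powr (2 * real m / (real m + 1)) + x ^ (2 * m))"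
    proof (intro allI impI conjI)
      fix h x :: real assume h: "0 < h \<and> h \<le> 1"
      let ?S = "sqrt (h powr (2 * real m / (real m + 1)) + x ^ (2 * m))"
      have S0: "?S \<ge> 0" using even_pow_nonneg[of x m] by simp
      have "inverse C * ?S \<le> sqrt c * ?S" using iC S0 by (rule mult_right_mono)
      also have "\<dots> \<le> cmod (phi1 m \<alpha> \<mu> h x)"
        using phi1_norm(1)[OF assms(1,2,3), of h x] h by (simp add: c_def)
      finally show "inverse C * ?S \<le> cmod (phi1 m \<alpha> \<mu> h x)" .
      have "cmod (phi1 m \<alpha> \<mu> h x) \<le> sqrt D * ?S"
        using phi1_norm(2)[OF assms(1,2,3), of h x] h by (simp add: D_def)
      also have "\<dots> \<le> C * ?S" using DC S0 by (rule mult_right_mono)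
      finally show "cmod (phi1 m \<alpha> \<mu> h x) \<le> C * ?S" .
    qed
    then show ?thesis using C0 by blast
  qed
  have III: "\<forall>h x. 0 < h \<and> h \<le> 1 \<longrightarrow>
        (phi m \<alpha> \<mu> h has_vector_derivative
           sqrt_pos_im (E_par m \<alpha> \<mu> h + complex_of_real (x ^ (2 * m) / real m))) (at x)
        \<and> (phi1 m \<alpha> \<mu> h has_vector_derivative
           complex_of_real (x ^ (2 * m - 1)) * inverse (phi1 m \<alpha> \<mu> h x)) (at x)
        \<and> (phi2 m \<alpha> \<mu> h has_vector_derivative
           (complex_of_real ((1 - 1 / real m) * x ^ (4 * m - 2))
              + E_par m \<alpha> \<mu> h * complex_of_real ((2 * real m - 1) * x ^ (2 * m - 2)))
           * inverse (phi1 m \<alpha> \<mu> h x ^ 3)) (at x)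
        \<and> f_pot m \<alpha> \<mu> h x =
           - complex_of_real (h ^ 2 * x ^ (2 * m - 2)) *
             (complex_of_real ((1/4 + 1 / (2 * real m)) * x ^ (2 * m))
              - complex_of_real (real m - 1/2) * E_par m \<alpha> \<mu> h)
             * inverse (phi1 m \<alpha> \<mu> h x ^ 4)"
  proof (intro allI impI conjI)
    fix h x :: real assume h: "0 < h \<and> h \<le> 1"
    then have h0: "h > 0" by simp
    show "(phi m \<alpha> \<mu> h has_vector_derivative
           sqrt_pos_im (E_par m \<alpha> \<mu> h + complex_of_real (x ^ (2 * m) / real m))) (at x)"
      using phi_deriv[OF m1 assms(3) h0, of \<alpha> x] by (simp add: phi_integrand_def)
    show "(phi1 m \<alpha> \<mu> h has_vector_derivative
           complex_of_real (x ^ (2 * m - 1)) * inverse (phi1 m \<alpha> \<mu> h x)) (at x)"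
      unfolding phi1_eq[OF m1 assms(3) h0] by (rule g_deriv[OF m1 assms(3) h0])
    have D2: "(phi2 m \<alpha> \<mu> h has_vector_derivative
           (complex_of_real ((1 - 1 / real m) * x ^ (4 * m - 2))
              + E_par m \<alpha> \<mu> h * complex_of_real ((2 * real m - 1) * x ^ (2 * m - 2)))
           * inverse (phi_integrand m \<alpha> \<mu> h x ^ 3)) (at x)"
      by (rule phi2_deriv[OF m1 assms(3) h0])
    then show "(phi2 m \<alpha> \<mu> h has_vector_derivative
           (complex_of_real ((1 - 1 / real m) * x ^ (4 * m - 2))
              + E_par m \<alpha> \<mu> h * complex_of_real ((2 * real m - 1) * x ^ (2 * m - 2)))
           * inverse (phi1 m \<alpha> \<mu> h x ^ 3)) (at x)"
      unfolding phi1_eq[OF m1 assms(3) h0] .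
    have p3: "phi3 m \<alpha> \<mu> h x = (complex_of_real ((1 - 1 / real m) * x ^ (4 * m - 2))
              + E_par m \<alpha> \<mu> h * complex_of_real ((2 * real m - 1) * x ^ (2 * m - 2)))
           * inverse (phi_integrand m \<alpha> \<mu> h x ^ 3)"
      unfolding phi3_def using D2 by (rule vector_derivative_at)
    have p2: "phi2 m \<alpha> \<mu> h x = complex_of_real (x ^ (2 * m - 1)) * inverse (phi_integrand m \<alpha> \<mu> h x)"
      unfolding phi2_eq[OF m1 assms(3) h0] ..
    obtain n where n: "m = Suc n" using m1 by (cases m) auto
    show "f_pot m \<alpha> \<mu> h x =
           - complex_of_real (h ^ 2 * x ^ (2 * m - 2)) *
             (complex_of_real ((1/4 + 1 / (2 * real m)) * x ^ (2 * m))
              - complex_of_real (real m - 1/2) * E_par m \<alpha> \<mu> h)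
             * inverse (phi1 m \<alpha> \<mu> h x ^ 4)"
      unfolding f_pot_def p3 p2 phi1_eq[OF m1 assms(3) h0]
      by (rule alg2[OF w_props(5)[OF assms(3) h0] n])
  qed
  show ?thesis using I1 I2 II III by blast
qed


end
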